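(* Let $n_t \geq 1$ be an integer and let $M \geq 2$ be an integer such that $\log_2 M$ is a positive integer. For an integer $n_{rf}$ with $1 \leq n_{rf} \leq n_t$, define \[ R_{\mathrm{gsim}}(n_{rf}) = \left\lfloor \log_2 \binom{n_t}{n_{rf}} \right\rfloor + n_{rf}\log_2 M, \] and let $R^{\max}_{\mathrm{gsim}} = \max_{1\leq n_{rf}\leq n_t} R_{\mathrm{gsim}}(n_{rf})$. Then $R^{\max}_{\mathrm{gsim}} > n_t \log_2 M$ if and only if $n_t \geq 2M$.
   Context: This is the achievable rate (bits per channel use) of generalized spatial index modulation: the transmitter has $n_t$ transmit antennas and $n_{rf}$ transmit RF chains, and in each channel use it activates $n_{rf}$ of the $n_t$ antennas, chosen from a fixed set of $2^{\lfloor \log_2 \binom{n_t}{n_{rf}}\rfloor}$ activation patterns. Each active antenna sends a symbol from an $M$-ary modulation alphabet (e.g. $M$-QAM). The value $n_t\log_2 M$ is the rate of spatial multiplexing, i.e. the case $n_{rf}=n_t$. *)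

theory Defs
  imports Complex_Main
begin

definition R_gsim :: "nat \<Rightarrow> nat \<Rightarrow> nat \<Rightarrow> real" where
  "R_gsim nt M nrf = real_of_int \<lfloor>log 2 (real (nt choose nrf))\<rfloor> + real nrf * log 2 (real M)"

definition R_gsim_max :: "nat \<Rightarrow> nat \<Rightarrow> real" where
  "R_gsim_max nt M = Max ((\<lambda>nrf. R_gsim nt M nrf) ` {1..nt})"

end

theory Submission
  imports Defs
begin

lemma choose_bound:
  fixes nt M :: nat
  assumes "nt < 2 * M"
  shows "nt choose (Suc m) < 2 * M ^ (Suc m)"
proof (induction m)
  case 0
  then show ?case using assms by simp
next
  case (Suc m)
  have eq: "(nt choose Suc (Suc m)) * Suc (Suc m) = (nt choose Suc m) * (nt - Suc m)"
    using binomial_absorption[of "Suc m" nt] binomial_absorb_comp[of nt "Suc m"]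
    by (simp add: mult.commute)
  show ?case
  proof (cases "nt - Suc m = 0")
    case True
    then have z: "nt choose Suc (Suc m) = 0" using eq by simp
    have "M > 0" using assms by simp
    then have pos: "0 < 2 * M ^ Suc (Suc m)" by simp
    show ?thesis unfolding z using pos .
  next
    case False
    have M: "M \<ge> 1" using assms by simp
    have "2 * M \<le> Suc (Suc m) * M" by (rule mult_le_mono1) simp
    hence h1: "nt - Suc m \<le> Suc (Suc m) * M" using assms by linarith
    have "(nt choose Suc (Suc m)) * Suc (Suc m) < 2 * M ^ Suc m * (Suc (Suc m) * M)"
      unfolding eq using Suc.IH h1 False
      by (intro mult_less_le_imp_less) auto
    also have "\<dots> = (2 * M ^ Suc (Suc m)) * Suc (Suc m)" by (simp add: algebra_simps)
    finally show ?thesis by (simp only: mult_less_cancel2)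
  qed
qed

lemma key:
  fixes nt n k :: nat
  assumes "n \<le> nt"
  shows "real_of_int \<lfloor>log 2 (real (nt choose n))\<rfloor> + real n * real k > real nt * real k
     \<longleftrightarrow> 2 ^ ((nt - n) * k + 1) \<le> nt choose n"
proof -
  have cpos: "real (nt choose n) > 0" using assms by simp
  have "real_of_int \<lfloor>log 2 (real (nt choose n))\<rfloor> + real n * real k > real nt * real k
     \<longleftrightarrow> \<lfloor>log 2 (real (nt choose n))\<rfloor> > int ((nt - n) * k)"
  proof -
    have e: "real nt * real k = real ((nt-n)*k) + real n * real k"
      using assms by (simp add: of_nat_diff algebra_simps)
    have "real_of_int \<lfloor>log 2 (real (nt choose n))\<rfloor> + real n * real k > real nt * real k
      \<longleftrightarrow> real_of_int \<lfloor>log 2 (real (nt choose n))\<rfloor> > real_of_int (int ((nt-n)*k))"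
      unfolding e by simp
    then show ?thesis by (simp only: of_int_less_iff)
  qed
  also have "\<dots> \<longleftrightarrow> int ((nt - n) * k + 1) \<le> \<lfloor>log 2 (real (nt choose n))\<rfloor>" by (simp; linarith)
  also have "\<dots> \<longleftrightarrow> real ((nt - n) * k + 1) \<le> log 2 (real (nt choose n))"
    by (metis le_floor_iff of_int_of_nat_eq)
  also have "\<dots> \<longleftrightarrow> 2 powr real ((nt - n) * k + 1) \<le> real (nt choose n)"
    using cpos by (simp add: le_log_iff)
  also have "\<dots> \<longleftrightarrow> real (2 ^ ((nt - n) * k + 1)) \<le> real (nt choose n)"
    by (subst powr_realpow) simp_all
  also have "\<dots> \<longleftrightarrow> 2 ^ ((nt - n) * k + 1) \<le> nt choose n" by (simp only: of_nat_le_iff)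
  finally show ?thesis .
qed

theorem theorem1:
  fixes nt M :: nat
  assumes "nt \<ge> 1" and "M \<ge> 2"
    and "\<exists>k::nat. k > 0 \<and> log 2 (real M) = real k"
  shows "R_gsim_max nt M > real nt * log 2 (real M) \<longleftrightarrow> nt \<ge> 2 * M"
proof -
  obtain k :: nat where k: "k > 0" "log 2 (real M) = real k" using assms(3) by blast
  have "real M = 2 powr (log 2 (real M))" using assms(2) by simp
  also have "\<dots> = 2 ^ k" using k by (simp add: powr_realpow)
  finally have Mk: "M = 2 ^ k" by (metis of_nat_eq_of_nat_power_cancel_iff of_nat_numeral)
  have pw: "(2::nat) ^ (m * k + 1) = 2 * M ^ m" for m
  proof -
    have "(2::nat) ^ (m * k) = (2 ^ k) ^ m" by (metis power_mult mult.commute)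
    then show ?thesis by (simp add: Mk)
  qed
  have "R_gsim_max nt M > real nt * log 2 (real M) \<longleftrightarrow>
        (\<exists>n\<in>{1..nt}. R_gsim nt M n > real nt * log 2 (real M))"
    unfolding R_gsim_max_def using assms(1) by (subst Max_gr_iff) auto
  also have "\<dots> \<longleftrightarrow> (\<exists>n\<in>{1..nt}. 2 * M ^ (nt - n) \<le> nt choose n)"
    unfolding R_gsim_def k(2) using key pw by (metis atLeastAtMost_iff)
  also have "\<dots> \<longleftrightarrow> nt \<ge> 2 * M"
  proof
    assume "\<exists>n\<in>{1..nt}. 2 * M ^ (nt - n) \<le> nt choose n"
    then obtain n where n: "n \<in> {1..nt}" "2 * M ^ (nt - n) \<le> nt choose n" by blast
    show "nt \<ge> 2 * M"
    proof (rule ccontr)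
      assume "\<not> nt \<ge> 2 * M"
      hence lt: "nt < 2 * M" by simp
      have sym: "nt choose n = nt choose (nt - n)"
        by (rule binomial_symmetric) (use n(1) in simp)
      show False
      proof (cases "nt - n")
        case 0
        then have "nt choose n = 1" using sym by simp
        then show ?thesis using n(2) 0 by simp
      next
        case (Suc m)
        then show ?thesis using choose_bound[OF lt, of m] n sym by simp
      qed
    qed
  next
    assume h: "nt \<ge> 2 * M"
    have ge: "nt \<ge> 4" using h assms(2) by simp
    have "nt - 1 \<in> {1..nt}" using ge by simp
    moreover have "2 * M ^ (nt - (nt - 1)) \<le> nt choose (nt - 1)"
    proof -
      have c: "nt choose (nt - 1) = nt" using binomial_symmetric[of 1 nt] ge by simp
      have d: "nt - (nt - 1) = 1" using ge by simp
      show ?thesis unfolding c d using h by simp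
    qed
    ultimately show "\<exists>n\<in>{1..nt}. 2 * M ^ (nt - n) \<le> nt choose n" by blast
  qed
  finally show ?thesis .
qed

end
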